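(* Let $\mathbb{X},\mathbb{Y}$ be real Banach spaces of dimension greater than $1$ and let $T\in\mathbb{L}(\mathbb{X},\mathbb{Y})$ be nonzero. Let $0<\delta,\delta_1,\delta_2<\|T\|$. Then: (i) $M_T(\delta)$ is nonempty. (ii) If $\delta_1<\delta_2$ then $M_T(\delta_1)\subseteq M_T(\delta_2)$. Moreover, if $T$ is not a scalar multiple of an isometry, then there exist $0<\delta_1<\delta_2<\|T\|$ such that $M_T(\delta_1)\subsetneq M_T(\delta_2)$. (iii) $M_T=\bigcap_{0<\delta<\|T\|}M_T(\delta)$. (iv) If $\mathbb{X}$ is finite-dimensional, then $T$ is injective if and only if $M_T(\delta)=S_{\mathbb{X}}$ for some $0<\delta<\|T\|$. This equivalence is not necessarily true if $\mathbb{X}$ is infinite-dimensional: there exist an infinite-dimensional Banach space $\mathbb{X}$ and an injective nonzero $T\in\mathbb{L}(\mathbb{X},\mathbb{X})$ such that $M_T(\delta)\neq S_{\mathbb{X}}$ for every $0<\delta<\|T\|$.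
   Context: $\mathbb{L}(\mathbb{X},\mathbb{Y})$ is the space of bounded linear operators with the operator norm; $S_{\mathbb{X}}$ is the unit sphere of $\mathbb{X}$. For $T\in\mathbb{L}(\mathbb{X},\mathbb{Y})$, the norm attainment set is $M_T=\{x\in S_{\mathbb{X}}:\|Tx\|=\|T\|\}$. For nonzero $T$ and $0<\delta<\|T\|$, the $\delta$-approximate norm attainment set is $M_T(\delta)=\{x\in S_{\mathbb{X}}:\|Tx\|>\|T\|-\delta\}$. *)

theory Defs
  imports "HOL-Analysis.Analysis"
begin

definition norm_att_set :: "('a::real_normed_vector \<Rightarrow>\<^sub>L 'b::real_normed_vector) \<Rightarrow> 'a set" where
  "norm_att_set T = {x \<in> sphere 0 1. norm (blinfun_apply T x) = norm T}"

definition approx_norm_att_set ::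
  "('a::real_normed_vector \<Rightarrow>\<^sub>L 'b::real_normed_vector) \<Rightarrow> real \<Rightarrow> 'a set" where
  "approx_norm_att_set T \<delta> = {x \<in> sphere 0 1. norm (blinfun_apply T x) > norm T - \<delta>}"

definition dim_gt_one :: "'a::real_vector itself \<Rightarrow> bool" where
  "dim_gt_one _ \<longleftrightarrow> (\<exists>B::'a set. independent B \<and> card B = 2)"

definition fin_dim :: "'a::real_vector itself \<Rightarrow> bool" where
  "fin_dim _ \<longleftrightarrow> (\<exists>B::'a set. finite B \<and> span B = UNIV)"

definition is_isometry :: "('a::real_normed_vector \<Rightarrow>\<^sub>L 'b::real_normed_vector) \<Rightarrow> bool" where
  "is_isometry U \<longleftrightarrow> (\<forall>x. norm (blinfun_apply U x) = norm x)"

definition scalar_mult_isometry :: "('a::real_normed_vector \<Rightarrow>\<^sub>L 'b::real_normed_vector) \<Rightarrow> bool" where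
  "scalar_mult_isometry T \<longleftrightarrow> (\<exists>c U. is_isometry U \<and> T = c *\<^sub>R U)"

end

theory Submission
  imports Defs
begin

lemma nsc: "norm (blinfun_apply (T::'a::real_normed_vector \<Rightarrow>\<^sub>L 'b::real_normed_vector) (z /\<^sub>R norm z)) = norm (blinfun_apply T z) / norm z"
proof -
  have "norm (blinfun_apply T (z /\<^sub>R norm z)) = norm (inverse (norm z) *\<^sub>R blinfun_apply T z)"
    by (simp only: blinfun.scaleR_right)
  also have "\<dots> = inverse (norm z) * norm (blinfun_apply T z)"
    by (simp only: norm_scaleR abs_inverse abs_norm_cancel)
  also have "\<dots> = norm (blinfun_apply T z) / norm z"
    by (metis divide_inverse mult.commute)
  finally show ?thesis .
qed

lemma approx_exists:
  fixes T :: "'a::real_normed_vector \<Rightarrow>\<^sub>L 'b::real_normed_vector"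
  assumes "0 < d" "d < norm T"
  shows "\<exists>x. norm x = 1 \<and> norm T - d < norm (blinfun_apply T x)"
proof -
  have bdd: "bdd_above (range (\<lambda>x. norm (blinfun_apply T x) / norm x))"
  proof (rule bdd_aboveI2)
    fix x show "norm (blinfun_apply T x) / norm x \<le> norm T"
      by (metis norm_blinfun divide_le_eq mult.commute norm_le_zero_iff not_le
          order_refl zero_le_divide_iff norm_ge_zero order.trans)
  qed
  have "norm T - d < (SUP x. norm (blinfun_apply T x) / norm x)"
    using assms by (simp add: norm_blinfun.rep_eq onorm_def)
  then obtain x where x: "norm T - d < norm (blinfun_apply T x) / norm x"
    using less_cSUP_iff[OF _ bdd] by blast
  have "x \<noteq> 0" using x assms by auto
  define y where "y = x /\<^sub>R norm x"
  have "norm y = 1" using \<open>x \<noteq> 0\<close> by (simp add: y_def)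
  moreover have "norm (blinfun_apply T y) = norm (blinfun_apply T x) / norm x"
    unfolding y_def by (rule nsc)
  ultimately show ?thesis using x by auto
qed

lemma not_smi_exists:
  fixes T :: "'a::real_normed_vector \<Rightarrow>\<^sub>L 'b::real_normed_vector"
  assumes nsmi: "\<not> scalar_mult_isometry T" and T0: "T \<noteq> 0"
  shows "\<exists>x. norm x = 1 \<and> 0 < norm (blinfun_apply T x) \<and> norm (blinfun_apply T x) < norm T"
proof (rule ccontr)
  assume H: "\<not> ?thesis"
  have nT: "norm T > 0" using T0 by simp
  have le: "norm (blinfun_apply T x) \<le> norm T" if "norm x = 1" for x
    using norm_blinfun[of T x] that by simp
  have H2: "blinfun_apply T x = 0 \<or> norm (blinfun_apply T x) = norm T" if "norm x = 1" for x
    using H le[OF that] that by force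
  show False
  proof (cases "\<exists>x0. norm x0 = 1 \<and> blinfun_apply T x0 = 0")
    case False
    then have all: "norm (blinfun_apply T x) = norm T" if "norm x = 1" for x
      using H2 that by blast
    define U where "U = (1 / norm T) *\<^sub>R T"
    have iso: "is_isometry U"
      unfolding is_isometry_def
    proof
      fix x :: 'a
      show "norm (blinfun_apply U x) = norm x"
      proof (cases "x = 0")
        case True then show ?thesis by simp
      next
        case False
        have "norm (x /\<^sub>R norm x) = 1" using False by simp
        from all[OF this] have "norm (blinfun_apply T x) / norm x = norm T"
          by (simp only: nsc)
        then have "norm (blinfun_apply T x) = norm T * norm x" using False
          by (simp add: divide_eq_eq)
        then show ?thesis using nT by (simp add: U_def scaleR_blinfun.rep_eq)
      qed
    qed
    have "T = norm T *\<^sub>R U" using nT by (simp add: U_def)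
    then show False using iso nsmi unfolding scalar_mult_isometry_def by blast
  next
    case True
    then obtain x0 where x0: "norm x0 = 1" "blinfun_apply T x0 = 0" by blast
    obtain y where y: "norm y = 1" "norm T - norm T / 2 < norm (blinfun_apply T y)"
      using approx_exists[of "norm T / 2" T] nT by auto
    define z where "z = x0 + (1/4) *\<^sub>R y"
    have Tz: "blinfun_apply T z = (1/4) *\<^sub>R blinfun_apply T y"
      using x0 by (simp add: z_def blinfun.add_right blinfun.scaleR_right)
    have "norm x0 \<le> norm z + norm ((1/4) *\<^sub>R y)"
      using norm_triangle_ineq4[of z "(1/4) *\<^sub>R y"] by (simp add: z_def)
    then have zl: "norm z \<ge> 3/4" using x0 y by simp
    define w where "w = z /\<^sub>R norm z"
    have zn: "z \<noteq> 0"
    proof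
      assume "z = 0" then show False using zl by simp
    qed
    have w1: "norm w = 1" using zn by (simp add: w_def)
    have Tw: "norm (blinfun_apply T w) = (1/4) * norm (blinfun_apply T y) / norm z"
      unfolding w_def nsc Tz by simp
    have Ty0: "0 < norm (blinfun_apply T y)" using y(2) nT by linarith
    have z0: "0 < norm z" using zl by linarith
    have "0 < (1/4) * norm (blinfun_apply T y) / norm z"
      using Ty0 z0 by (intro divide_pos_pos mult_pos_pos) auto
    then have p: "0 < norm (blinfun_apply T w)" using Tw by simp
    have "(1/4) * norm (blinfun_apply T y) / norm z \<le> (1/4) * norm (blinfun_apply T y) / (3/4)"
      using zl by (intro divide_left_mono) auto
    also have "\<dots> \<le> norm T / 3" using le[OF y(1)] by simp
    finally have "norm (blinfun_apply T w) \<le> norm T / 3" using Tw by simp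
    then have "norm (blinfun_apply T w) < norm T" using nT by linarith
    then show False using H w1 p by blast
  qed
qed

lemma findim_bdd_below:
  fixes T :: "'a::real_normed_vector \<Rightarrow>\<^sub>L 'b::real_normed_vector"
  assumes fd: "fin_dim TYPE('a)" and inj: "inj (blinfun_apply T)" and T0: "T \<noteq> 0"
  shows "\<exists>m>0. \<forall>x. norm x = 1 \<longrightarrow> m \<le> norm (blinfun_apply T x)"
proof -
  obtain B0 :: "'a set" where B0: "finite B0" "span B0 = UNIV"
    using fd unfolding fin_dim_def by blast
  obtain B where B: "B \<subseteq> B0" "independent B" "B0 \<subseteq> span B"
    using maximal_independent_subset[of B0] by blast
  have fB: "finite B" using B B0 finite_subset by blast
  have spB: "span B = UNIV"
    using B0(2) span_mono[OF B(3)] by (simp add: span_span top_le)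
  have Bne: "B \<noteq> {}"
  proof
    assume "B = {}"
    then have "\<forall>x::'a. x = 0" using spB by auto
    then have "T = 0" by (intro blinfun_eqI) (metis blinfun.zero_right zero_blinfun.rep_eq)
    then show False using T0 by simp
  qed
  define K0 :: "('a \<Rightarrow> real) set" where "K0 = PiE UNIV (\<lambda>i. if i \<in> B then {-1..1} else {0})"
  have "compactin (product_topology (\<lambda>i. euclidean) UNIV) K0"
    unfolding K0_def compactin_PiE by auto
  then have cK0: "compact K0" by (simp add: euclidean_product_topology)
  define K where "K = K0 \<inter> {c. (\<Sum>i\<in>B. \<bar>c i\<bar>) = 1}"
  have "closed {c::'a \<Rightarrow> real. (\<Sum>i\<in>B. \<bar>c i\<bar>) = 1}"
    by (intro closed_Collect_eq continuous_intros continuous_on_product_coordinates)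
  then have cK: "compact K" unfolding K_def using cK0 compact_Int_closed by blast
  define L where "L c = (\<Sum>i\<in>B. c i *\<^sub>R i)" for c :: "'a \<Rightarrow> real"
  have contL: "continuous_on UNIV L"
    unfolding L_def by (intro continuous_intros continuous_on_product_coordinates)
  define C where "C = L ` K"
  have cC: "compact C" unfolding C_def
    using compact_continuous_image[OF continuous_on_subset[OF contL] cK] by simp
  have C0: "x \<noteq> 0" if xC: "x \<in> C" for x
  proof
    assume "x = 0"
    then obtain c where c: "c \<in> K" "L c = 0" using xC C_def by auto
    have "\<forall>c. (\<Sum>v\<in>B. c v *\<^sub>R v) = 0 \<longrightarrow> (\<forall>v\<in>B. c v = 0)"
      using real_vector.independent_explicit_module[of B] B(2) fB by blast
    then have "\<forall>v\<in>B. c v = 0" using c(2) unfolding L_def by blast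
    then have "(\<Sum>i\<in>B. \<bar>c i\<bar>) = 0" by simp
    then show False using c K_def by simp
  qed
  obtain b where b: "b \<in> B" using Bne by blast
  define cb where "cb = (\<lambda>i. if i = b then 1 else (0::real))"
  have "cb \<in> K" using b fB unfolding K_def K0_def cb_def by auto
  then have Cne: "C \<noteq> {}" unfolding C_def by blast
  define g where "g x = norm (blinfun_apply T x) / norm x" for x
  have contg: "continuous_on C g"
    unfolding g_def using C0 by (intro continuous_intros) auto
  obtain x0 where x0: "x0 \<in> C" "\<And>y. y \<in> C \<Longrightarrow> g x0 \<le> g y"
    using continuous_attains_inf[OF cC Cne contg] by blast
  have "blinfun_apply T x0 \<noteq> 0"
    using inj C0[OF x0(1)] by (metis blinfun.zero_right injD)
  then have m0: "g x0 > 0" using C0[OF x0(1)] by (simp add: g_def)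
  show ?thesis
  proof (intro exI[of _ "g x0"] conjI allI impI m0)
    fix x :: 'a assume x1: "norm x = 1"
    have "x \<in> span B" using spB by simp
    then obtain u where u: "x = (\<Sum>v\<in>B. u v *\<^sub>R v)" using span_finite[OF fB] by auto
    define s where "s = (\<Sum>v\<in>B. \<bar>u v\<bar>)"
    have s0: "s > 0"
    proof (rule ccontr)
      assume "\<not> s > 0"
      then have "s = 0" unfolding s_def by (metis sum_nonneg abs_ge_zero order_less_le)
      then have "\<forall>v\<in>B. u v = 0" unfolding s_def using fB by (simp add: sum_nonneg_eq_0_iff)
      then have "x = 0" using u by simp
      then show False using x1 by simp
    qed
    define c where "c = (\<lambda>i. if i \<in> B then u i / s else 0)"
    have us: "\<bar>u i\<bar> \<le> s" if "i \<in> B" for i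
      unfolding s_def using member_le_sum[of i B "\<lambda>v. \<bar>u v\<bar>"] that fB by auto
    have ci: "\<bar>c i\<bar> \<le> 1" if "i \<in> B" for i
    proof -
      have "\<bar>c i\<bar> = \<bar>u i\<bar> / s" using that s0 by (simp add: c_def abs_divide)
      also have "\<dots> \<le> 1" using us[OF that] s0 by simp
      finally show ?thesis .
    qed
    have "c i \<in> (if i \<in> B then {-1..1} else {0})" for i
    proof (cases "i \<in> B")
      case True then show ?thesis using ci[of i] by (simp add: abs_le_iff)
    next
      case False then show ?thesis by (simp add: c_def)
    qed
    then have "c \<in> K0" unfolding K0_def PiE_iff by simp
    moreover have "(\<Sum>i\<in>B. \<bar>c i\<bar>) = 1"
    proof -
      have "(\<Sum>i\<in>B. \<bar>c i\<bar>) = (\<Sum>i\<in>B. \<bar>u i\<bar> / s)" unfolding c_def using s0 by (intro sum.cong) auto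
      also have "\<dots> = 1" using s0 by (simp add: s_def sum_divide_distrib[symmetric])
      finally show ?thesis .
    qed
    ultimately have cK': "c \<in> K" unfolding K_def by simp
    have Lc: "L c = (1/s) *\<^sub>R x"
      unfolding L_def u c_def scaleR_sum_right by (intro sum.cong) auto
    have "g (L c) = norm (blinfun_apply T x)"
      using s0 x1 by (simp add: Lc g_def blinfun.scaleR_right)
    moreover have "L c \<in> C" using cK' C_def by blast
    ultimately show "g x0 \<le> norm (blinfun_apply T x)" using x0(2) by metis
  qed
qed

definition wmul :: "(nat \<Rightarrow>\<^sub>C real) \<Rightarrow> (nat \<Rightarrow>\<^sub>C real)" where
  "wmul f = Bcontfun (\<lambda>n. apply_bcontfun f n / (real n + 1))"

lemma wmul_mem: "(\<lambda>n. apply_bcontfun f n / (real n + 1)) \<in> bcontfun"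
proof (rule bcontfun_normI[where b="norm f"])
  show "continuous_on UNIV (\<lambda>n. apply_bcontfun f n / (real n + 1))" by simp
  fix n :: nat
  have "norm (apply_bcontfun f n / (real n + 1)) = \<bar>apply_bcontfun f n\<bar> / (real n + 1)"
    by (simp add: abs_divide)
  also have "\<dots> \<le> \<bar>apply_bcontfun f n\<bar>" by (simp add: divide_le_eq mult_le_cancel_left1)
  also have "\<dots> \<le> norm f" using norm_bounded[of f n] by simp
  finally show "norm (apply_bcontfun f n / (real n + 1)) \<le> norm f" .
qed

lemma wmul_apply [simp]: "apply_bcontfun (wmul f) n = apply_bcontfun f n / (real n + 1)"
  unfolding wmul_def using Bcontfun_inverse[OF wmul_mem[of f]] by simp

lemma sum_apply_bcontfun:
  fixes F :: "'i \<Rightarrow> (nat \<Rightarrow>\<^sub>C real)"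
  shows "finite t \<Longrightarrow> apply_bcontfun (sum F t) n = (\<Sum>v\<in>t. apply_bcontfun (F v) n)"
  by (induction t rule: finite_induct) auto

lemma bl_wmul: "bounded_linear wmul"
proof (rule bounded_linear_intro[where K=1])
  fix x y show "wmul (x + y) = wmul x + wmul y"
    by (rule bcontfun_eqI) (simp add: add_divide_distrib)
next
  fix r x show "wmul (r *\<^sub>R x) = r *\<^sub>R wmul x"
    by (rule bcontfun_eqI) simp
next
  fix x show "norm (wmul x) \<le> norm x * 1"
  proof -
    have "norm (apply_bcontfun (wmul x) n) \<le> norm x" for n
    proof -
      have "norm (apply_bcontfun (wmul x) n) = \<bar>apply_bcontfun x n\<bar> / (real n + 1)"
        by (simp add: abs_divide)
      also have "\<dots> \<le> \<bar>apply_bcontfun x n\<bar>" by (simp add: divide_le_eq mult_le_cancel_left1)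
      also have "\<dots> \<le> norm x" using norm_bounded[of x n] by simp
      finally show ?thesis .
    qed
    then show ?thesis using norm_bound[of "wmul x" "norm x"] by simp
  qed
qed

definition ee :: "nat \<Rightarrow> (nat \<Rightarrow>\<^sub>C real)" where
  "ee N = Bcontfun (\<lambda>n. if n = N then 1 else 0)"

lemma ee_mem: "(\<lambda>n::nat. if n = N then 1 else (0::real)) \<in> bcontfun"
  by (rule bcontfun_normI[where b=1]) auto

lemma ee_apply [simp]: "apply_bcontfun (ee N) n = (if n = N then 1 else 0)"
  unfolding ee_def using Bcontfun_inverse[OF ee_mem[of N]] by simp

lemma norm_ee: "norm (ee N) = 1"
proof (rule antisym)
  show "norm (ee N) \<le> 1" by (rule norm_bound) simp
  show "1 \<le> norm (ee N)" using norm_bounded[of "ee N" N] by simp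
qed

lemma wmul_ee: "wmul (ee N) = (1 / (real N + 1)) *\<^sub>R ee N"
  by (rule bcontfun_eqI) simp

lemma ee_inj: "ee M = ee N \<Longrightarrow> M = N"
  by (metis ee_apply zero_neq_one)

lemma not_fin_dim_linf: "\<not> fin_dim TYPE(nat \<Rightarrow>\<^sub>C real)"
proof
  assume "fin_dim TYPE(nat \<Rightarrow>\<^sub>C real)"
  then obtain B :: "(nat \<Rightarrow>\<^sub>C real) set" where B: "finite B" "span B = UNIV"
    unfolding fin_dim_def by blast
  define E where "E = ee ` {..card B}"
  have injE: "inj_on ee {..card B}" by (meson ee_inj inj_onI)
  have cE: "card E = card B + 1" using card_image[OF injE] by (simp add: E_def)
  have indE: "independent E"
    unfolding real_vector.independent_explicit_module
  proof (intro allI impI)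
    fix t u v
    assume t: "finite t" "t \<subseteq> E" and su: "(\<Sum>v\<in>t. u v *\<^sub>R v) = 0" and v: "v \<in> t"
    obtain N where N: "v = ee N" using v t E_def by auto
    have "0 = apply_bcontfun (\<Sum>v\<in>t. u v *\<^sub>R v) N" using su by simp
    also have "\<dots> = (\<Sum>w\<in>t. u w * apply_bcontfun w N)"
      using sum_apply_bcontfun[OF t(1), of "\<lambda>w. u w *\<^sub>R w" N] by simp
    also have "\<dots> = (\<Sum>w\<in>t. if w = v then u w else 0)"
    proof (rule sum.cong)
      fix w assume "w \<in> t"
      then obtain M where M: "w = ee M" using t E_def by auto
      show "u w * apply_bcontfun w N = (if w = v then u w else 0)"
        using M N ee_inj by auto
    qed simp
    also have "\<dots> = u v" using t(1) v by simp
    finally show "u v = 0" by simp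
  qed
  have "finite E \<and> card E \<le> card B"
    using independent_span_bound[OF B(1) indE] B(2) by simp
  then show False using cE by simp
qed

lemma linf_example:
  "\<exists>S :: (nat \<Rightarrow>\<^sub>C real) \<Rightarrow>\<^sub>L (nat \<Rightarrow>\<^sub>C real). S \<noteq> 0 \<and> inj (blinfun_apply S) \<and>
         (\<forall>\<delta>. 0 < \<delta> \<and> \<delta> < norm S \<longrightarrow> approx_norm_att_set S \<delta> \<noteq> sphere 0 1)"
proof (intro exI conjI allI impI)
  define S where "S = Blinfun wmul"
  have SA: "blinfun_apply S = wmul" unfolding S_def using bl_wmul
    by (simp add: bounded_linear_Blinfun_apply)
  have "blinfun_apply S (ee 0) \<noteq> 0"
  proof
    assume "blinfun_apply S (ee 0) = 0"
    then have "apply_bcontfun (wmul (ee 0)) 0 = 0" using SA by simp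
    then show False by simp
  qed
  then show "S \<noteq> 0" by auto
  show "inj (blinfun_apply S)" unfolding SA
  proof (rule injI)
    fix f g assume "wmul f = wmul g"
    then have "apply_bcontfun (wmul f) n = apply_bcontfun (wmul g) n" for n by simp
    then have "apply_bcontfun f n = apply_bcontfun g n" for n
      by (simp add: divide_cancel_right)
    then show "f = g" by (rule bcontfun_eqI)
  qed
  fix \<delta> :: real assume d: "0 < \<delta> \<and> \<delta> < norm S"
  then obtain N where N: "inverse (real (Suc N)) < norm S - \<delta>"
    using reals_Archimedean[of "norm S - \<delta>"] by auto
  have "norm (blinfun_apply S (ee N)) = 1 / (real N + 1)"
    unfolding SA wmul_ee using norm_ee by simp
  also have "\<dots> = inverse (real (Suc N))" by (simp add: inverse_eq_divide)
  finally have "norm (blinfun_apply S (ee N)) < norm S - \<delta>" using N by simp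
  then have "ee N \<notin> approx_norm_att_set S \<delta>" unfolding approx_norm_att_set_def by auto
  moreover have "ee N \<in> sphere 0 1" using norm_ee by simp
  ultimately show "approx_norm_att_set S \<delta> \<noteq> sphere 0 1" by blast
qed

theorem proposition2p1:
  fixes T :: "'a::banach \<Rightarrow>\<^sub>L 'b::banach"
  assumes "dim_gt_one TYPE('a)" and "dim_gt_one TYPE('b)" and "T \<noteq> 0"
  shows
    "(\<forall>\<delta>. 0 < \<delta> \<and> \<delta> < norm T \<longrightarrow> approx_norm_att_set T \<delta> \<noteq> {})
   \<and> (\<forall>\<delta>\<^sub>1 \<delta>\<^sub>2. 0 < \<delta>\<^sub>1 \<and> \<delta>\<^sub>1 < \<delta>\<^sub>2 \<and> \<delta>\<^sub>2 < norm T \<longrightarrow>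
        approx_norm_att_set T \<delta>\<^sub>1 \<subseteq> approx_norm_att_set T \<delta>\<^sub>2)
   \<and> (\<not> scalar_mult_isometry T \<longrightarrow>
        (\<exists>\<delta>\<^sub>1 \<delta>\<^sub>2. 0 < \<delta>\<^sub>1 \<and> \<delta>\<^sub>1 < \<delta>\<^sub>2 \<and> \<delta>\<^sub>2 < norm T \<and>
            approx_norm_att_set T \<delta>\<^sub>1 \<subset> approx_norm_att_set T \<delta>\<^sub>2))
   \<and> norm_att_set T = (\<Inter>\<delta>\<in>{0<..<norm T}. approx_norm_att_set T \<delta>)
   \<and> (fin_dim TYPE('a) \<longrightarrow>
        (inj (blinfun_apply T) \<longleftrightarrow>
          (\<exists>\<delta>. 0 < \<delta> \<and> \<delta> < norm T \<and> approx_norm_att_set T \<delta> = sphere 0 1)))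
   \<and> (\<not> fin_dim TYPE(nat \<Rightarrow>\<^sub>C real) \<and>
      (\<exists>S :: (nat \<Rightarrow>\<^sub>C real) \<Rightarrow>\<^sub>L (nat \<Rightarrow>\<^sub>C real). S \<noteq> 0 \<and> inj (blinfun_apply S) \<and>
         (\<forall>\<delta>. 0 < \<delta> \<and> \<delta> < norm S \<longrightarrow> approx_norm_att_set S \<delta> \<noteq> sphere 0 1)))"
proof -
  have nT: "norm T > 0" using assms(3) by simp
  have sph: "x \<in> sphere 0 1 \<longleftrightarrow> norm x = 1" for x :: 'a by simp
  have P1: "\<forall>\<delta>. 0 < \<delta> \<and> \<delta> < norm T \<longrightarrow> approx_norm_att_set T \<delta> \<noteq> {}"
  proof (intro allI impI)
    fix \<delta> :: real assume "0 < \<delta> \<and> \<delta> < norm T"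
    then obtain x where "norm x = 1" "norm T - \<delta> < norm (blinfun_apply T x)"
      using approx_exists[of \<delta> T] by auto
    then show "approx_norm_att_set T \<delta> \<noteq> {}" unfolding approx_norm_att_set_def by auto
  qed
  have P2: "\<forall>\<delta>\<^sub>1 \<delta>\<^sub>2. 0 < \<delta>\<^sub>1 \<and> \<delta>\<^sub>1 < \<delta>\<^sub>2 \<and> \<delta>\<^sub>2 < norm T \<longrightarrow>
        approx_norm_att_set T \<delta>\<^sub>1 \<subseteq> approx_norm_att_set T \<delta>\<^sub>2"
    unfolding approx_norm_att_set_def by auto
  have P3: "\<not> scalar_mult_isometry T \<longrightarrow>
        (\<exists>\<delta>\<^sub>1 \<delta>\<^sub>2. 0 < \<delta>\<^sub>1 \<and> \<delta>\<^sub>1 < \<delta>\<^sub>2 \<and> \<delta>\<^sub>2 < norm T \<and>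
            approx_norm_att_set T \<delta>\<^sub>1 \<subset> approx_norm_att_set T \<delta>\<^sub>2)"
  proof
    assume "\<not> scalar_mult_isometry T"
    then obtain x0 where x0: "norm x0 = 1" "0 < norm (blinfun_apply T x0)"
      "norm (blinfun_apply T x0) < norm T"
      using not_smi_exists assms(3) by blast
    define a where "a = norm T - norm (blinfun_apply T x0)"
    have a: "0 < a" "a < norm T" using x0 by (auto simp: a_def)
    have "norm T - (a + norm T) / 2 < norm (blinfun_apply T x0)"
      using x0(2) unfolding a_def by (simp add: field_simps)
    then have "x0 \<in> approx_norm_att_set T ((a + norm T) / 2)"
      unfolding approx_norm_att_set_def using x0(1) by simp
    moreover have "x0 \<notin> approx_norm_att_set T (a / 2)"
    proof -
      have "norm (blinfun_apply T x0) \<le> norm T - a / 2"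
        using x0(3) unfolding a_def by (simp add: field_simps)
      then show ?thesis unfolding approx_norm_att_set_def by simp
    qed
    moreover have "approx_norm_att_set T (a / 2) \<subseteq> approx_norm_att_set T ((a + norm T) / 2)"
    proof -
      have "0 < a / 2 \<and> a / 2 < (a + norm T) / 2 \<and> (a + norm T) / 2 < norm T" using a by (auto simp: field_simps)
      then show ?thesis using P2 by blast
    qed
    ultimately show "\<exists>\<delta>\<^sub>1 \<delta>\<^sub>2. 0 < \<delta>\<^sub>1 \<and> \<delta>\<^sub>1 < \<delta>\<^sub>2 \<and> \<delta>\<^sub>2 < norm T \<and>
            approx_norm_att_set T \<delta>\<^sub>1 \<subset> approx_norm_att_set T \<delta>\<^sub>2"
      using a by (intro exI[of _ "a/2"] exI[of _ "(a + norm T) / 2"]) auto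
  qed
  have P4: "norm_att_set T = (\<Inter>\<delta>\<in>{0<..<norm T}. approx_norm_att_set T \<delta>)"
  proof (rule set_eqI)
    fix x :: 'a
    have le: "norm (blinfun_apply T x) \<le> norm T" if "norm x = 1"
      using norm_blinfun[of T x] that by simp
    show "x \<in> norm_att_set T \<longleftrightarrow> x \<in> (\<Inter>\<delta>\<in>{0<..<norm T}. approx_norm_att_set T \<delta>)"
    proof
      assume "x \<in> norm_att_set T"
      then show "x \<in> (\<Inter>\<delta>\<in>{0<..<norm T}. approx_norm_att_set T \<delta>)"
        unfolding norm_att_set_def approx_norm_att_set_def by auto
    next
      assume H: "x \<in> (\<Inter>\<delta>\<in>{0<..<norm T}. approx_norm_att_set T \<delta>)"
      have "norm T / 2 \<in> {0<..<norm T}" using nT by auto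
      then have "x \<in> approx_norm_att_set T (norm T / 2)" using H by blast
      then have x1: "norm x = 1" unfolding approx_norm_att_set_def by simp
      have "norm T \<le> norm (blinfun_apply T x)"
      proof (rule ccontr)
        assume nle: "\<not> norm T \<le> norm (blinfun_apply T x)"
        define d where "d = norm T - norm (blinfun_apply T x)"
        have "0 < d" "d \<le> norm T" using nle by (auto simp: d_def)
        then have "d / 2 \<in> {0<..<norm T}" by auto
        then have "x \<in> approx_norm_att_set T (d / 2)" using H by blast
        then have "norm T - d / 2 < norm (blinfun_apply T x)"
          unfolding approx_norm_att_set_def by simp
        then show False using \<open>0 < d\<close> by (simp add: d_def field_simps)
      qed
      then show "x \<in> norm_att_set T"
        unfolding norm_att_set_def using le[OF x1] x1 by auto
    qed
  qed
  have P5: "fin_dim TYPE('a) \<longrightarrow>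
        (inj (blinfun_apply T) \<longleftrightarrow>
          (\<exists>\<delta>. 0 < \<delta> \<and> \<delta> < norm T \<and> approx_norm_att_set T \<delta> = sphere 0 1))"
  proof (intro impI iffI)
    assume fd: "fin_dim TYPE('a)" and inj: "inj (blinfun_apply T)"
    obtain m where m: "m > 0" "\<And>x. norm x = 1 \<Longrightarrow> m \<le> norm (blinfun_apply T x)"
      using findim_bdd_below[OF fd inj assms(3)] by blast
    obtain x where x: "norm x = 1" "norm T - norm T / 2 < norm (blinfun_apply T x)"
      using approx_exists[of "norm T / 2" T] nT by auto
    have "m \<le> norm T" using m(2)[OF x(1)] norm_blinfun[of T x] x(1) by simp
    show "\<exists>\<delta>. 0 < \<delta> \<and> \<delta> < norm T \<and> approx_norm_att_set T \<delta> = sphere 0 1"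
    proof (intro exI[of _ "norm T - m / 2"] conjI)
      show "0 < norm T - m / 2" using \<open>m \<le> norm T\<close> nT by linarith
      show "norm T - m / 2 < norm T" using m by simp
      show "approx_norm_att_set T (norm T - m / 2) = sphere 0 1"
        unfolding approx_norm_att_set_def using m by fastforce
    qed
  next
    assume "\<exists>\<delta>. 0 < \<delta> \<and> \<delta> < norm T \<and> approx_norm_att_set T \<delta> = sphere 0 1"
    then obtain \<delta> where d: "0 < \<delta>" "\<delta> < norm T" "approx_norm_att_set T \<delta> = sphere 0 1" by blast
    have pos: "0 < norm (blinfun_apply T x)" if "norm x = 1" for x
    proof -
      have "x \<in> approx_norm_att_set T \<delta>" using d(3) that by simp
      then show ?thesis using d(2) unfolding approx_norm_att_set_def by auto
    qed
    show "inj (blinfun_apply T)"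
    proof (rule injI)
      fix x y assume e: "blinfun_apply T x = blinfun_apply T y"
      show "x = y"
      proof (rule ccontr)
        assume "x \<noteq> y"
        then have "norm (x - y) \<noteq> 0" by simp
        have "norm ((x - y) /\<^sub>R norm (x - y)) = 1" using \<open>x \<noteq> y\<close> by simp
        from pos[OF this] have "0 < norm (blinfun_apply T (x - y)) / norm (x - y)"
          by (simp only: nsc)
        then show False using e by (simp add: blinfun.diff_right)
      qed
    qed
  qed
  show ?thesis using P1 P2 P3 P4 P5 not_fin_dim_linf linf_example by blast
qed

end
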